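(* For all smooth functions $\varrho,a^1,a^2,a^3$ on $\mathbb{R}^5$, $$\sum_{i_1,\dots,i_5,j_1,\dots,j_5=1}^{5}\varepsilon^{i_1i_2i_3i_4i_5}\varepsilon^{j_1j_2j_3j_4j_5}\,\frac{\partial\varrho}{\partial x^{i_1}}\,\frac{\partial\varrho}{\partial x^{i_2}}\,\frac{\partial^2a^1}{\partial x^{i_3}\partial x^{j_1}}\,\frac{\partial a^1}{\partial x^{j_2}}\,\frac{\partial^2a^2}{\partial x^{i_4}\partial x^{j_3}}\,\frac{\partial a^2}{\partial x^{j_4}}\,\frac{\partial a^3}{\partial x^{i_5}}\,\frac{\partial a^3}{\partial x^{j_5}}=0.$$ This is the formula of the embedding into dimension 5 of the 4D Nambu micro-graph Hamiltonian $H^{(9)}_{d=4}=[1,2,3,5;\ 3,4,5,6]$. That micro-graph has: - Levi-Civita vertices $1,2$ carrying $\varrho\,\varepsilon$; - Casimir vertices $3,4$ carrying $a^1$ and $5,6$ carrying $a^2$, where vertex $2+\ell$ carries $a^1$ of vertex $\ell$ and vertex $4+\ell$ carries $a^2$ of vertex $\ell$. Its embedding is $[1,2,3,5,7;\ 3,4,5,6,8]$, with the new Casimir $a^3$ at vertices $7,8$.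
   Context: $\varepsilon^{i_1\dots i_5}$ denotes the Levi-Civita symbol in dimension 5, and $x^1,\dots,x^5$ are the coordinates on $\mathbb{R}^5$. In the encoding $[\,\cdot\,;\,\cdot\,]$, the $\ell$-th tuple lists the target vertices of the ordered edges issued from Levi-Civita vertex $\ell$. Each edge with summation index $i$ applies $\partial/\partial x^i$ to the content of its target vertex. The embedding from dimension $d$ to $d+1$ is defined as follows: - each Levi-Civita vertex gets one extra, last, edge to a new terminal vertex carrying a new Casimir $a^{d-1}$; - all other edges are kept unchanged. *)

theory Defs
  imports "HOL-Analysis.Analysis"
begin

definition partial :: "'n::finite \<Rightarrow> (real^'n \<Rightarrow> real) \<Rightarrow> real^'n \<Rightarrow> real" where
  "partial i f x = frechet_derivative f (at x) (axis i 1)"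

fun Ck :: "nat \<Rightarrow> (real^'n::finite \<Rightarrow> real) \<Rightarrow> bool" where
  "Ck 0 f = continuous_on UNIV f"
| "Ck (Suc k) f = (f differentiable_on UNIV \<and> (\<forall>i. Ck k (partial i f)))"

definition smooth :: "(real^'n::finite \<Rightarrow> real) \<Rightarrow> bool" where
  "smooth f = (\<forall>k. Ck k f)"

definition levi_civita :: "'a::{finite,linorder} list \<Rightarrow> real" where
  "levi_civita xs = (if distinct xs \<and> set xs = UNIV
     then (-1) ^ card {(p,q). p < q \<and> q < length xs \<and> xs ! q < xs ! p} else 0)"

end

theory Submission
  imports Defs
begin

lemma lc_swap:
  fixes a b :: "'a::{finite,linorder}"
  shows "levi_civita (b # a # ys) = - levi_civita (a # b # ys)"
proof (cases "distinct (a # b # ys) \<and> set (a # b # ys) = UNIV")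
  case False
  then show ?thesis by (auto simp: levi_civita_def)
next
  case True
  define L where "L = a # b # ys"
  define L' where "L' = b # a # ys"
  define n where "n = length L"
  define s where "s = (\<lambda>p::nat. if p = 0 then 1 else if p = 1 then 0 else p)"
  define I where "I = {(p,q). p < q \<and> q < length L \<and> L ! q < L ! p}"
  define I' where "I' = {(p,q). p < q \<and> q < length L' \<and> L' ! q < L' ! p}"
  have len: "length L' = length L" by (simp add: L_def L'_def)
  have nth: "L' ! p = L ! s p" for p
    by (cases p) (auto simp: L_def L'_def s_def split: nat.splits)
  have ss: "s (s p) = p" for p by (simp add: s_def)
  have ab: "a \<noteq> b" using True by auto
  have fin: "finite I" "finite I'"
    by (rule finite_subset[of _ "{..<length L} \<times> {..<length L}"], auto simp: I_def)
       (rule finite_subset[of _ "{..<length L'} \<times> {..<length L'}"], auto simp: I'_def)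
  define f where "f = (\<lambda>(p,q). (s p, s q))"
  have img: "I' - {(0,1)} = f ` (I - {(0,1)})"
  proof (rule set_eqI, rule iffI)
    fix z assume z: "z \<in> I' - {(0,1)}"
    obtain p q where pq: "z = (p,q)" by fastforce
    have "(s p, s q) \<in> I - {(0,1)}"
      using z unfolding pq I_def I'_def nth len by (auto simp: s_def split: if_splits)
    moreover have "z = f (s p, s q)" by (simp add: f_def pq ss)
    ultimately show "z \<in> f ` (I - {(0,1)})" by blast
  next
    fix z assume "z \<in> f ` (I - {(0,1)})"
    then obtain w where w: "z = f w" "w \<in> I - {(0,1)}" by blast
    obtain p q where pw: "w = (p,q)" by fastforce
    have pq: "z = (s p, s q)" "(p,q) \<in> I - {(0,1)}" using w pw by (auto simp: f_def)
    then show "z \<in> I' - {(0,1)}"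
      unfolding I_def I'_def nth len by (auto simp: s_def ss split: if_splits)
  qed
  have inj: "inj f" by (rule injI) (auto simp: f_def, metis ss, metis ss)
  have c1: "card (I' - {(0,1)}) = card (I - {(0,1)})"
    unfolding img by (rule card_image, rule inj_on_subset[OF inj], simp)
  have len2: "1 < length L" by (simp add: L_def)
  have x: "((0::nat,1::nat) \<in> I) = (b < a)" by (auto simp: I_def L_def)
  have x': "((0::nat,1::nat) \<in> I') = (a < b)" by (auto simp: I'_def L'_def)
  have cI: "card I = card (I - {(0,1)}) + (if (0,1) \<in> I then 1 else 0)"
    using fin(1) card.remove[OF fin(1), of "(0,1)"] by (cases "(0::nat,1::nat) \<in> I") auto
  have cI': "card I' = card (I' - {(0,1)}) + (if (0,1) \<in> I' then 1 else 0)"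
    using fin(2) card.remove[OF fin(2), of "(0,1)"] by (cases "(0::nat,1::nat) \<in> I'") auto
  have cc: "card I' = card I + 1 \<or> card I = card I' + 1"
    using cI cI' c1 x x' ab by (cases "a < b") auto
  have d': "distinct L'" "set L' = UNIV" using True by (auto simp: L'_def)
  have e1: "levi_civita (a # b # ys) = (-1) ^ card I"
    using True unfolding levi_civita_def I_def L_def by simp
  have e2: "levi_civita (b # a # ys) = (-1) ^ card I'"
    using d' unfolding levi_civita_def I'_def L'_def by simp
  from cc show ?thesis
  proof
    assume h: "card I' = card I + 1"
    show ?thesis unfolding e1 e2 h by simp
  next
    assume h: "card I = card I' + 1"
    show ?thesis unfolding e1 e2 h by simp
  qed
qed

lemma eqt:
  fixes a b :: "'a::{finite,linorder}"
  shows "levi_civita [b,a,c,d,e] = - levi_civita [a,b,c,d,e]" by (rule lc_swap)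
lemma m2: fixes X Y L pa pb :: real shows "X = -Y \<Longrightarrow> X * L * pb * pa = - (Y * L * pa * pb)"
  by simp
lemma pt:
  fixes a b :: "'a::{finite,linorder}" and L pa pb :: real
  shows "levi_civita [b,a,c,d,e] * L * pb * pa = - (levi_civita [a,b,c,d,e] * L * pa * pb)"
  by (rule m2, rule eqt)

lemma sum_neg_cong: "(\<And>x. x\<in>A \<Longrightarrow> f x = - g x) \<Longrightarrow> sum f A = - (sum g A :: real)"
  by (simp add: sum_negf[symmetric])

lemma negmul: "P = - Q \<Longrightarrow> P * r = - (Q * (r::real))" by simp

theorem mainTheorem3:
  fixes \<rho> a1 a2 a3 :: "real^5 \<Rightarrow> real" and x :: "real^5"
  assumes "smooth \<rho>" "smooth a1" "smooth a2" "smooth a3"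
  shows "(\<Sum>i1\<in>UNIV. \<Sum>i2\<in>UNIV. \<Sum>i3\<in>UNIV. \<Sum>i4\<in>UNIV. \<Sum>i5\<in>UNIV.
          \<Sum>j1\<in>UNIV. \<Sum>j2\<in>UNIV. \<Sum>j3\<in>UNIV. \<Sum>j4\<in>UNIV. \<Sum>j5\<in>UNIV.
            levi_civita [i1, i2, i3, i4, i5] * levi_civita [j1, j2, j3, j4, j5]
            * partial i1 \<rho> x * partial i2 \<rho> x
            * partial i3 (partial j1 a1) x * partial j2 a1 x
            * partial i4 (partial j3 a2) x * partial j4 a2 x
            * partial i5 a3 x * partial j5 a3 x) = 0"
    (is "(\<Sum>i1\<in>UNIV. \<Sum>i2\<in>UNIV. ?G i1 i2) = 0")
proof -
  have neg: "?G i2 i1 = - ?G i1 i2" for i1 i2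
    by ((rule sum_neg_cong)+, (rule negmul)+, rule pt)
  have "(\<Sum>i1\<in>UNIV. \<Sum>i2\<in>UNIV. ?G i1 i2) = (\<Sum>i2\<in>UNIV. \<Sum>i1\<in>UNIV. ?G i1 i2)"
    by (rule sum.swap)
  also have "\<dots> = (\<Sum>i2\<in>UNIV. \<Sum>i1\<in>UNIV. - ?G i2 i1)"
    by (rule sum.cong[OF refl], rule sum.cong[OF refl], rule neg)
  also have "\<dots> = - (\<Sum>i1\<in>UNIV. \<Sum>i2\<in>UNIV. ?G i1 i2)"
    by (simp only: sum_negf)
  finally show ?thesis by simp
qed

end
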